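(* Let $R_1,R_2,R_3$ be mutually orthogonal unit vectors in $\mathbb{R}^3$, $w_1,w_2,w_3\ge0$, $\nu_1,\nu_2,\nu_3$ Borel probability measures on $[-1,1]$, $\hat I=\sum_{i=1}^3w_iA_{R_i,\nu_i}$, and $E^0=\int d\hat I$, $E^1=\int\Omega\,d\hat I$, $E^2=\int\Omega\otimes\Omega\,d\hat I$. Let $\lambda_i=R_i^TE^2R_i$ and $F_i=E^1\cdot R_i$. Assume $\lambda_i>0$ for $i=1,2,3$ and \[ \frac{F_1^2}{\lambda_1}+\frac{F_2^2}{\lambda_2}+\frac{F_3^2}{\lambda_3}=E^0. \] Then at least one of the following holds: (1) there is $i$ with $\lambda_i=F_i^2/E^0$, and for the two other indices $j,k$ one has $\lambda_j=\lambda_k$ and $F_j=F_k=0$; (2) $|F_j|=\lambda_j$ for all $j=1,2,3$.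
   Context: For a unit vector $R\in\mathbb{R}^3$ and a finite Borel measure $\nu$ on $[-1,1]$, $A_{R,\nu}$ denotes the axisymmetric measure on the unit sphere $\mathbb{S}^2$ defined by $\int\varphi\,dA_{R,\nu}=\frac{1}{2\pi}\int_{-1}^1\int_0^{2\pi}\varphi\big(\mu R+\sqrt{1-\mu^2}(\cos\theta\,P+\sin\theta\,Q)\big)\,d\theta\,d\nu(\mu)$ for continuous $\varphi$, where $(P,Q,R)$ is any orthonormal basis. If $\nu$ has density $f$, then $A_{R,\nu}$ has density $\frac{1}{2\pi}f(\Omega\cdot R)$ with respect to surface measure. *)

theory Defs
  imports "HOL-Probability.Probability"
begin

text \<open>An orthonormal completion (P,Q) of a unit vector R in R^3 (any choice; the
  axisymmetric measure does not depend on it).\<close>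
definition obasis :: "(real^3) \<Rightarrow> ((real^3) \<times> (real^3))" where
  "obasis R = (SOME (P,Q). norm P = 1 \<and> norm Q = 1 \<and> P \<bullet> Q = 0 \<and> P \<bullet> R = 0 \<and> Q \<bullet> R = 0)"

text \<open>The axisymmetric measure A_{R,nu} on the sphere (as a measure on R^3): the image of
  nu times the normalised Lebesgue measure d theta/(2 pi) on [0,2 pi] under
  (mu,theta) |-> mu R + sqrt(1-mu^2)(cos theta P + sin theta Q).\<close>
definition axi :: "real^3 \<Rightarrow> real measure \<Rightarrow> (real^3) measure" where
  "axi R \<nu> = (case obasis R of (P,Q) \<Rightarrow>
     distr (\<nu> \<Otimes>\<^sub>M uniform_measure lborel {0..2*pi}) borel
       (\<lambda>(\<mu>,\<theta>). \<mu> *\<^sub>R R + sqrt (1 - \<mu>\<^sup>2) *\<^sub>R (cos \<theta> *\<^sub>R P + sin \<theta> *\<^sub>R Q)))"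

text \<open>Moments of I = sum_i w_i A_{R_i,nu_i}, i = 1,2,3 (integrals against the sum
  measure are the weighted sums of the integrals).\<close>
definition mom0 :: "(nat \<Rightarrow> real^3) \<Rightarrow> (nat \<Rightarrow> real) \<Rightarrow> (nat \<Rightarrow> real measure) \<Rightarrow> real" where
  "mom0 R w \<nu> = (\<Sum>i\<in>{1,2,3}. w i * (\<integral>\<Omega>. 1 \<partial>axi (R i) (\<nu> i)))"

definition mom1 :: "(nat \<Rightarrow> real^3) \<Rightarrow> (nat \<Rightarrow> real) \<Rightarrow> (nat \<Rightarrow> real measure) \<Rightarrow> real^3" where
  "mom1 R w \<nu> = (\<Sum>i\<in>{1,2,3}. w i *\<^sub>R (\<integral>\<Omega>. \<Omega> \<partial>axi (R i) (\<nu> i)))"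

definition mom2 :: "(nat \<Rightarrow> real^3) \<Rightarrow> (nat \<Rightarrow> real) \<Rightarrow> (nat \<Rightarrow> real measure) \<Rightarrow> real^3^3" where
  "mom2 R w \<nu> = (\<Sum>i\<in>{1,2,3}. w i *\<^sub>R (\<integral>\<Omega>. (\<chi> a b. \<Omega>$a * \<Omega>$b) \<partial>axi (R i) (\<nu> i)))"

end

theory Submission
  imports Defs "HOL-Probability.Probability"
begin

abbreviation "Uth \<equiv> uniform_measure lborel {0..2*pi}"


lemma U_eq: "uniform_measure lborel {0..2*pi} = density lborel (\<lambda>x. ennreal (indicator {0..2*pi} x / (2*pi)))"
  unfolding uniform_measure_def
  apply (rule density_cong) apply simp_all
  apply (auto simp: indicator_def divide_ennreal ennreal_1[symmetric] simp del: ennreal_1)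
  done

lemma U_integral:
  fixes f :: "real \<Rightarrow> real"
  assumes [measurable]: "f \<in> borel_measurable borel"
  shows "integral\<^sup>L (uniform_measure lborel {0..2*pi}) f = (LBINT x:{0..2*pi}. f x) / (2*pi)"
  unfolding U_eq
  apply (subst integral_density)
  apply (auto simp: set_lebesgue_integral_def)
  done


lemma lbint_FTC:
  fixes f F :: "real \<Rightarrow> real"
  assumes "a \<le> b" "\<And>x. (F has_real_derivative f x) (at x)" "continuous_on UNIV f"
  shows "(LBINT x:{a..b}. f x) = F b - F a"
proof -
  have "(LBINT x=a..b. f x) = F b - F a"
    apply (rule interval_integral_FTC_finite)
    using assms by (auto intro: continuous_on_subset has_field_derivative_at_within
       simp: has_real_derivative_iff_has_vector_derivative[symmetric])
  then show ?thesis using interval_integral_Icc[OF assms(1), of f] by simp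
qed

lemma lb_cos: "(LBINT x:{0..2*pi}. cos x) = 0"
  by (subst lbint_FTC[where F=sin]) (auto intro!: derivative_eq_intros continuous_intros)
lemma lb_sin: "(LBINT x:{0..2*pi}. sin x) = 0"
  by (subst lbint_FTC[where F="\<lambda>x. - cos x"]) (auto intro!: derivative_eq_intros continuous_intros)
lemma lb_sincos: "(LBINT x:{0..2*pi}. sin x * cos x) = 0"
  by (subst lbint_FTC[where F="\<lambda>x. (sin x)^2/2"]) (auto intro!: derivative_eq_intros continuous_intros)
lemma lb_cos2: "(LBINT x:{0..2*pi}. (cos x)^2) = pi"
  apply (subst lbint_FTC[where F="\<lambda>x. (x + sin x * cos x)/2"]) apply (auto intro!: derivative_eq_intros continuous_intros)
  subgoal for x using sin_cos_squared_add[of x] unfolding power2_eq_square by algebra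
  done
lemma lb_sin2: "(LBINT x:{0..2*pi}. (sin x)^2) = pi"
  apply (subst lbint_FTC[where F="\<lambda>x. (x - sin x * cos x)/2"]) apply (auto intro!: derivative_eq_intros continuous_intros)
  subgoal for x using sin_cos_squared_add[of x] unfolding power2_eq_square by algebra
  done


lemma obasis_exists:
  fixes R :: "real^3" assumes "norm R = 1"
  shows "\<exists>P Q. norm P = 1 \<and> norm Q = 1 \<and> P \<bullet> Q = 0 \<and> P \<bullet> R = 0 \<and> Q \<bullet> R = 0"
proof -
  obtain S where S: "R \<in> S" "pairwise orthogonal S" "\<And>x. x \<in> S \<Longrightarrow> norm x = 1"
    "independent S" "card S = DIM(real^3)"
    using vector_in_orthonormal_basis[OF assms] by metis
  have "card (S - {R}) = 2" using S by simp
  then obtain P Q where PQ: "S - {R} = {P, Q}" "P \<noteq> Q" by (auto simp: card_Suc_eq numeral_2_eq_2)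
  then have "P \<in> S" "Q \<in> S" "P \<noteq> R" "Q \<noteq> R" by auto
  with S PQ show ?thesis
    by (intro exI[of _ P] exI[of _ Q]) (auto simp: pairwise_def orthogonal_def inner_commute)
qed

lemma parseval3:
  fixes P Q R v :: "real^3"
  assumes "norm P = 1" "norm Q = 1" "norm R = 1" "P \<bullet> Q = 0" "P \<bullet> R = 0" "Q \<bullet> R = 0"
  shows "(v \<bullet> P)\<^sup>2 + (v \<bullet> Q)\<^sup>2 + (v \<bullet> R)\<^sup>2 = (norm v)\<^sup>2"
proof -
  have ne: "P \<noteq> Q" "P \<noteq> R" "Q \<noteq> R" using assms by (auto simp: dot_square_norm[symmetric])
  let ?S = "{P, Q, R}"
  have po: "pairwise orthogonal ?S" using assms
    by (auto simp: pairwise_def orthogonal_def inner_commute)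
  have n0: "0 \<notin> ?S" using assms by auto
  have ind: "independent ?S" by (rule pairwise_orthogonal_independent[OF po n0])
  have c: "card ?S = dim (UNIV :: (real^3) set)" using ne by (simp add: dim_UNIV)
  have sp: "v \<in> span ?S" using card_eq_dim[of ?S UNIV] ind c by auto
  have e: "(\<Sum>i\<in>?S. (v \<bullet> i) *\<^sub>R i) = v"
    by (rule orthonormal_basis_expand[OF po _ sp]) (use assms in auto)
  have "(norm v)\<^sup>2 = v \<bullet> v" by (simp add: dot_square_norm)
  also have "\<dots> = v \<bullet> (\<Sum>i\<in>?S. (v \<bullet> i) *\<^sub>R i)" using e by simp
  also have "\<dots> = (v \<bullet> P)\<^sup>2 + (v \<bullet> Q)\<^sup>2 + (v \<bullet> R)\<^sup>2"
    using ne by (simp add: inner_sum_right power2_eq_square inner_add_right)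
  finally show ?thesis by simp
qed




lemma U_prob: "prob_space Uth"
  by (rule prob_space_uniform_measure) auto

lemma prodint:
  fixes N :: "real measure" and f q :: "real \<Rightarrow> real"
  assumes N: "prob_space N" "sets N = sets borel" and ae: "AE x in N. \<bar>f x\<bar> \<le> B"
  and f[measurable]: "f \<in> borel_measurable borel" and q[measurable]: "q \<in> borel_measurable borel" and qb: "\<And>y. \<bar>q y\<bar> \<le> C"
  shows "integrable (N \<Otimes>\<^sub>M Uth) (\<lambda>z. f (fst z) * q (snd z))"
    and "(\<integral>z. f (fst z) * q (snd z) \<partial>(N \<Otimes>\<^sub>M Uth)) = integral\<^sup>L N f * integral\<^sup>L Uth q"
proof -
  interpret N: prob_space N by fact
  interpret U: prob_space Uth by (rule U_prob)
  interpret NU: pair_prob_space N Uth ..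
  have fN[measurable]: "f \<in> borel_measurable N" using f by (subst measurable_cong_sets[OF N(2) refl])
  have qU[measurable]: "q \<in> borel_measurable Uth" using q by (subst measurable_cong_sets[of _ borel _ borel]) auto
  have gm[measurable]: "(\<lambda>z. f (fst z) * q (snd z)) \<in> borel_measurable (N \<Otimes>\<^sub>M Uth)"
    by (intro borel_measurable_times measurable_compose[OF measurable_fst fN] measurable_compose[OF measurable_snd qU])
  have C: "0 \<le> C" using qb[of 0] by linarith
  have "AE z in N \<Otimes>\<^sub>M Uth. norm (f (fst z) * q (snd z)) \<le> B * C"
  proof (rule NU.AE_pair_measure)
    show "{x \<in> space (N \<Otimes>\<^sub>M Uth). norm (f (fst x) * q (snd x)) \<le> B * C} \<in> sets (N \<Otimes>\<^sub>M Uth)"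
      using measurable_compose[OF gm borel_measurable_norm] unfolding borel_measurable_iff_le by blast
    show "AE x in N. AE y in Uth. norm (f (fst (x, y)) * q (snd (x, y))) \<le> B * C"
      using ae
    proof eventually_elim
      case (elim x)
      show ?case
        by (rule AE_I2) (simp add: abs_mult mult_mono' qb elim C)
    qed
  qed
  then show int: "integrable (N \<Otimes>\<^sub>M Uth) (\<lambda>z. f (fst z) * q (snd z))"
    by (rule NU.P.integrable_const_bound) (rule gm)
  have "(\<integral>z. f (fst z) * q (snd z) \<partial>(N \<Otimes>\<^sub>M Uth)) = (\<integral>x. (\<integral>y. f x * q y \<partial>Uth) \<partial>N)"
    using NU.integral_fst'[OF int] by simp
  also have "\<dots> = integral\<^sup>L N f * integral\<^sup>L Uth q" by simp
  finally show "(\<integral>z. f (fst z) * q (snd z) \<partial>(N \<Otimes>\<^sub>M Uth)) = integral\<^sup>L N f * integral\<^sup>L Uth q" .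
qed

lemma U_cos: "(\<integral>x. cos x \<partial>Uth) = 0" by (simp add: U_integral lb_cos)
lemma U_sin: "(\<integral>x. sin x \<partial>Uth) = 0" by (simp add: U_integral lb_sin)
lemma U_sincos: "(\<integral>x. sin x * cos x \<partial>Uth) = 0" by (simp add: U_integral lb_sincos)
lemma U_cos2: "(\<integral>x. (cos x)^2 \<partial>Uth) = 1/2" by (simp add: U_integral lb_cos2)
lemma U_sin2: "(\<integral>x. (sin x)^2 \<partial>Uth) = 1/2" by (simp add: U_integral lb_sin2)
lemma U_one: "(\<integral>x. 1 \<partial>Uth) = (1::real)"
proof -
  interpret prob_space Uth by (rule U_prob)
  show ?thesis by simp
qed

lemma mat_norm_bound: "norm ((\<chi> a b. w$a * w$b) :: real^3^3) \<le> 9 * (norm (w::real^3))\<^sup>2"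
proof -
  let ?M = "(\<chi> a b. w$a * w$b) :: real^3^3"
  have "norm ?M \<le> (\<Sum>a\<in>UNIV. norm (?M$a))" unfolding norm_vec_def by (rule L2_set_le_sum) simp
  also have "\<dots> \<le> (\<Sum>a\<in>(UNIV::3 set). 3 * (norm w)\<^sup>2)"
  proof (rule sum_mono)
    fix a :: 3
    have "norm (?M$a) \<le> (\<Sum>b\<in>UNIV. \<bar>?M$a$b\<bar>)" by (rule norm_le_l1_cart)
    also have "\<dots> \<le> (\<Sum>b\<in>(UNIV::3 set). (norm w)\<^sup>2)"
    proof (rule sum_mono)
      fix b :: 3
      have "\<bar>w$a\<bar> * \<bar>w$b\<bar> \<le> norm w * norm w"
        by (intro mult_mono component_le_norm_cart) auto
      then show "\<bar>?M$a$b\<bar> \<le> (norm w)\<^sup>2" by (simp add: abs_mult power2_eq_square)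
    qed
    also have "\<dots> = 3 * (norm w)\<^sup>2" by simp
    finally show "norm (?M$a) \<le> 3 * (norm w)\<^sup>2" .
  qed
  also have "\<dots> = 9 * (norm w)\<^sup>2" by simp
  finally show ?thesis .
qed


lemma axi_moments:
  fixes R P Q v :: "real^3" and N :: "real measure"
  assumes R: "norm R = 1" and PQ: "obasis R = (P,Q)"
    and N: "prob_space N" "sets N = sets borel" "emeasure N {-1..1} = 1"
  shows "(\<integral>\<Omega>. 1 \<partial>axi R N) = (1::real)"
    and "(\<integral>\<Omega>. \<Omega> \<partial>axi R N) \<bullet> v = (\<integral>x. x \<partial>N) * (R \<bullet> v)"
    and "v \<bullet> ((\<integral>\<Omega>. (\<chi> a b. \<Omega>$a * \<Omega>$b) \<partial>axi R N) *v v) =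
          (\<integral>x. x\<^sup>2 \<partial>N) * (R \<bullet> v)\<^sup>2 + (1 - (\<integral>x. x\<^sup>2 \<partial>N)) * ((P \<bullet> v)\<^sup>2 + (Q \<bullet> v)\<^sup>2) / 2"
proof -
  interpret N: prob_space N by fact
  interpret U: prob_space Uth by (rule U_prob)
  interpret NU: pair_prob_space N Uth ..
  define g where "g = (\<lambda>(\<mu>::real,\<theta>::real). \<mu> *\<^sub>R R + sqrt (1 - \<mu>\<^sup>2) *\<^sub>R (cos \<theta> *\<^sub>R P + sin \<theta> *\<^sub>R Q))"
  have axi: "axi R N = distr (N \<Otimes>\<^sub>M Uth) borel g" unfolding axi_def PQ g_def by simp
  have ob: "norm P = 1 \<and> norm Q = 1 \<and> P \<bullet> Q = 0 \<and> P \<bullet> R = 0 \<and> Q \<bullet> R = 0"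
  proof -
    have "\<exists>x. (case x of (P,Q) \<Rightarrow> norm P = 1 \<and> norm Q = 1 \<and> P \<bullet> Q = 0 \<and> P \<bullet> R = 0 \<and> Q \<bullet> R = 0)"
      using obasis_exists[OF R] by auto
    from someI_ex[OF this] show ?thesis using PQ unfolding obasis_def by simp
  qed
  have sNU: "sets (N \<Otimes>\<^sub>M Uth) = sets (borel :: (real \<times> real) measure)"
  proof -
    have "sets (N \<Otimes>\<^sub>M Uth) = sets (borel \<Otimes>\<^sub>M borel :: (real \<times> real) measure)"
      by (rule sets_pair_measure_cong) (simp_all add: N(2))
    then show ?thesis by (metis borel_prod)
  qed
  have meas: "F \<in> borel_measurable (N \<Otimes>\<^sub>M Uth)" if "continuous_on UNIV F" for F :: "real \<times> real \<Rightarrow> 'b::topological_space"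
    by (subst measurable_cong_sets[OF sNU refl]) (rule borel_measurable_continuous_onI[OF that])
  have gc: "continuous_on UNIV g" unfolding g_def case_prod_unfold
    by (intro continuous_intros)
  have gm: "g \<in> borel_measurable (N \<Otimes>\<^sub>M Uth)" by (rule meas[OF gc])
  have ae: "AE x in N. x \<in> {-1..1}"
    using N(3) by (subst N.AE_in_set_eq_1) (auto simp: N(2) N.emeasure_eq_measure)
  have aeNU: "AE z in N \<Otimes>\<^sub>M Uth. fst z \<in> {-1..1}"
  proof (rule NU.AE_pair_measure)
    show "{x \<in> space (N \<Otimes>\<^sub>M Uth). fst x \<in> {- 1..1}} \<in> sets (N \<Otimes>\<^sub>M Uth)"
      using measurable_sets[OF measurable_fst, of "{-1..1}" N Uth] by (simp add: N(2) Int_def conj_commute)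
    show "AE x in N. AE y in Uth. fst (x, y) \<in> {- 1..1}" using ae by simp
  qed
  have sb: "\<bar>sqrt (1 - x\<^sup>2)\<bar> \<le> 1" if "x \<in> {-1..1}" for x :: real
  proof -
    have "x\<^sup>2 \<le> 1" using that by (simp add: abs_square_le_1 abs_le_iff)
    then show ?thesis by (simp add: real_sqrt_le_1_iff)
  qed
  have gb: "norm (g z) \<le> 3" if "fst z \<in> {-1..1}" for z
  proof -
    obtain x y where z: "z = (x,y)" by (cases z)
    have x: "\<bar>x\<bar> \<le> 1" using that z by auto
    have "norm (g z) \<le> norm (x *\<^sub>R R) + norm (sqrt (1 - x\<^sup>2) *\<^sub>R (cos y *\<^sub>R P + sin y *\<^sub>R Q))"
      unfolding z g_def by (simp only: prod.case) (rule norm_triangle_ineq)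
    also have "\<dots> \<le> 1 + 1 * 2"
    proof (rule add_mono)
      show "norm (x *\<^sub>R R) \<le> 1" using x R by simp
      have "norm (cos y *\<^sub>R P + sin y *\<^sub>R Q) \<le> norm (cos y *\<^sub>R P) + norm (sin y *\<^sub>R Q)" by (rule norm_triangle_ineq)
      also have "\<dots> \<le> 2"
      proof -
        have "norm (cos y *\<^sub>R P) + norm (sin y *\<^sub>R Q) = \<bar>cos y\<bar> + \<bar>sin y\<bar>" using ob by simp
        then show ?thesis using abs_cos_le_one[of y] abs_sin_le_one[of y] by linarith
      qed
      finally have "norm (cos y *\<^sub>R P + sin y *\<^sub>R Q) \<le> 2" .
      moreover have "\<bar>sqrt (1 - x\<^sup>2)\<bar> \<le> 1" using sb[of x] that z by auto
      ultimately show "norm (sqrt (1 - x\<^sup>2) *\<^sub>R (cos y *\<^sub>R P + sin y *\<^sub>R Q)) \<le> 1 * 2"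
        using mult_mono[of "\<bar>sqrt (1 - x\<^sup>2)\<bar>" 1 "norm (cos y *\<^sub>R P + sin y *\<^sub>R Q)" 2] by simp
    qed
    finally show ?thesis by simp
  qed
  have intg: "integrable (N \<Otimes>\<^sub>M Uth) g"
    by (rule NU.P.integrable_const_bound[where B=3, OF _ gm]) (use aeNU gb in \<open>auto elim: AE_mp\<close>)
  have pa: "prob_space (axi R N)" unfolding axi by (rule NU.P.prob_space_distr[OF gm])
  show "(\<integral>\<Omega>. 1 \<partial>axi R N) = (1::real)"
    using prob_space.prob_space[OF pa] by simp
  have PI: "integrable (N \<Otimes>\<^sub>M Uth) (\<lambda>z. f (fst z) * q (snd z)) \<and>
      (\<integral>z. f (fst z) * q (snd z) \<partial>(N \<Otimes>\<^sub>M Uth)) = integral\<^sup>L N f * integral\<^sup>L Uth q"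
    if "f \<in> borel_measurable borel" "q \<in> borel_measurable borel" "\<And>x. x \<in> {-1..1} \<Longrightarrow> \<bar>f x\<bar> \<le> 1"
       "\<And>y. \<bar>q y\<bar> \<le> 1" for f q :: "real \<Rightarrow> real"
  proof -
    have "AE x in N. \<bar>f x\<bar> \<le> 1" using ae by eventually_elim (rule that(3))
    from prodint[OF N(1,2) this that(1,2,4)] show ?thesis by blast
  qed
  define s where "s = (\<lambda>x::real. sqrt (1 - x\<^sup>2))"
  have sm: "s \<in> borel_measurable borel" unfolding s_def by measurable
  have sb': "\<bar>s x\<bar> \<le> 1" if "x \<in> {-1..1}" for x using sb[OF that] by (simp add: s_def)
  have xb: "\<bar>x\<bar> \<le> 1" if "x \<in> {-1..1}" for x :: real using that by auto
  have intx: "integrable N (\<lambda>x. x)"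
  proof (rule N.integrable_const_bound[where B=1])
    show "AE x in N. norm x \<le> 1" using ae by eventually_elim auto
  qed (simp add: N(2) measurable_cong_sets[OF N(2) refl])
  have intx2: "integrable N (\<lambda>x. x\<^sup>2)"
  proof (rule N.integrable_const_bound[where B=1])
    show "AE x in N. norm (x\<^sup>2) \<le> 1" using ae by eventually_elim (auto simp: abs_square_le_1)
  qed (simp add: N(2) measurable_cong_sets[OF N(2) refl])
  have s2: "(\<integral>x. (s x)\<^sup>2 \<partial>N) = 1 - (\<integral>x. x\<^sup>2 \<partial>N)"
  proof -
    have "(\<integral>x. (s x)\<^sup>2 \<partial>N) = (\<integral>x. 1 - x\<^sup>2 \<partial>N)"
    proof (rule integral_cong_AE)
      show "AE x in N. (s x)\<^sup>2 = 1 - x\<^sup>2" using ae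
        by eventually_elim (auto simp: s_def abs_square_le_1 abs_le_iff)
    qed (simp_all add: N(2) measurable_cong_sets[OF N(2) refl] s_def)
    also have "\<dots> = 1 - (\<integral>x. x\<^sup>2 \<partial>N)" using intx2 by (simp add: N.prob_space)
    finally show ?thesis .
  qed
  have vm: "(\<lambda>\<Omega>::real^3. \<Omega> \<bullet> v) \<in> borel_measurable borel"
    by (intro borel_measurable_continuous_onI continuous_intros)
  have intA: "integrable (axi R N) (\<lambda>\<Omega>. \<Omega>)"
    unfolding axi by (subst integrable_distr_eq[OF gm]) (simp_all add: intg)
  have i1: "integrable (N \<Otimes>\<^sub>M Uth) (\<lambda>z. fst z)" "(\<integral>z. fst z \<partial>(N \<Otimes>\<^sub>M Uth)) = (\<integral>x. x \<partial>N)"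
    using PI[of "\<lambda>x. x" "\<lambda>_. 1"] xb by (simp_all add: U_one)
  have i2: "integrable (N \<Otimes>\<^sub>M Uth) (\<lambda>z. s (fst z) * cos (snd z))" "(\<integral>z. s (fst z) * cos (snd z) \<partial>(N \<Otimes>\<^sub>M Uth)) = 0"
    using PI[of s cos] sm sb' by (simp_all add: U_cos)
  have i3: "integrable (N \<Otimes>\<^sub>M Uth) (\<lambda>z. s (fst z) * sin (snd z))" "(\<integral>z. s (fst z) * sin (snd z) \<partial>(N \<Otimes>\<^sub>M Uth)) = 0"
    using PI[of s sin] sm sb' by (simp_all add: U_sin)
  have ge: "g z \<bullet> v = (R \<bullet> v) * fst z + (P \<bullet> v) * (s (fst z) * cos (snd z)) + (Q \<bullet> v) * (s (fst z) * sin (snd z))" for z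
    by (cases z) (simp add: g_def s_def inner_add_left inner_commute algebra_simps)
  have "(\<integral>\<Omega>. \<Omega> \<partial>axi R N) \<bullet> v = (\<integral>\<Omega>. \<Omega> \<bullet> v \<partial>axi R N)" using intA by simp
  also have "\<dots> = (\<integral>z. g z \<bullet> v \<partial>(N \<Otimes>\<^sub>M Uth))" unfolding axi by (rule integral_distr[OF gm vm])
  also have "\<dots> = (\<integral>x. x \<partial>N) * (R \<bullet> v)"
    unfolding ge using i1 i2 i3 by simp
  finally show "(\<integral>\<Omega>. \<Omega> \<partial>axi R N) \<bullet> v = (\<integral>x. x \<partial>N) * (R \<bullet> v)" .
  show "v \<bullet> ((\<integral>\<Omega>. (\<chi> a b. \<Omega>$a * \<Omega>$b) \<partial>axi R N) *v v) =
          (\<integral>x. x\<^sup>2 \<partial>N) * (R \<bullet> v)\<^sup>2 + (1 - (\<integral>x. x\<^sup>2 \<partial>N)) * ((P \<bullet> v)\<^sup>2 + (Q \<bullet> v)\<^sup>2) / 2"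
  proof -
    define mf where "mf = (\<lambda>\<Omega>::real^3. (\<chi> a b. \<Omega>$a * \<Omega>$b) :: real^3^3)"
    define T where "T = (\<lambda>M::real^3^3. v \<bullet> (M *v v))"
    have Tl: "bounded_linear T"
      unfolding linear_conv_bounded_linear[symmetric] T_def
      by (rule linearI) (simp_all add: matrix_vector_mult_add_rdistrib inner_add_right
           scaleR_matrix_vector_assoc[symmetric])
    have Tmf: "T (mf \<Omega>) = (\<Omega> \<bullet> v)\<^sup>2" for \<Omega>
      unfolding T_def mf_def
      by (simp add: matrix_vector_mult_def inner_vec_def sum_3 power2_eq_square algebra_simps)
    have mfc: "continuous_on UNIV mf" unfolding mf_def by (intro continuous_intros)
    have mfm: "mf \<in> borel_measurable borel" by (rule borel_measurable_continuous_onI[OF mfc])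
    have mgm: "(\<lambda>z. mf (g z)) \<in> borel_measurable (N \<Otimes>\<^sub>M Uth)"
      by (rule meas) (rule continuous_on_compose2[OF mfc gc], auto)
    have mgb: "norm (mf (g z)) \<le> 81" if "fst z \<in> {-1..1}" for z
    proof -
      have "norm (mf (g z)) \<le> 9 * (norm (g z))\<^sup>2" unfolding mf_def by (rule mat_norm_bound)
      also have "\<dots> \<le> 9 * 3\<^sup>2"
        using gb[OF that] by (intro mult_left_mono power_mono) auto
      finally show ?thesis by simp
    qed
    have intM: "integrable (axi R N) mf"
      unfolding axi
      apply (subst integrable_distr_eq[OF gm mfm])
      by (rule NU.P.integrable_const_bound[where B=81, OF _ mgm]) (use aeNU mgb in \<open>auto elim: AE_mp\<close>)
    have j1: "integrable (N \<Otimes>\<^sub>M Uth) (\<lambda>z. (fst z)\<^sup>2)" "(\<integral>z. (fst z)\<^sup>2 \<partial>(N \<Otimes>\<^sub>M Uth)) = (\<integral>x. x\<^sup>2 \<partial>N)"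
      using PI[of "\<lambda>x. x\<^sup>2" "\<lambda>_. 1"] by (simp_all add: U_one abs_square_le_1 abs_le_iff)
    have j2: "integrable (N \<Otimes>\<^sub>M Uth) (\<lambda>z. fst z * s (fst z) * cos (snd z))" "(\<integral>z. fst z * s (fst z) * cos (snd z) \<partial>(N \<Otimes>\<^sub>M Uth)) = 0"
      using PI[of "\<lambda>x. x * s x" cos] sm sb' xb by (simp_all add: U_cos abs_mult mult_le_one)
    have j3: "integrable (N \<Otimes>\<^sub>M Uth) (\<lambda>z. fst z * s (fst z) * sin (snd z))" "(\<integral>z. fst z * s (fst z) * sin (snd z) \<partial>(N \<Otimes>\<^sub>M Uth)) = 0"
      using PI[of "\<lambda>x. x * s x" sin] sm sb' xb by (simp_all add: U_sin abs_mult mult_le_one)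
    have s2b: "\<bar>(s x)\<^sup>2\<bar> \<le> 1" if "x \<in> {-1..1}" for x using sb'[OF that] by (simp add: abs_square_le_1)
    have cs: "\<bar>(cos y)\<^sup>2\<bar> \<le> 1" "\<bar>(sin y)\<^sup>2\<bar> \<le> 1" "\<bar>sin y * cos y\<bar> \<le> 1" for y :: real
      by (simp_all add: abs_square_le_1 abs_mult mult_le_one)
    have j4: "integrable (N \<Otimes>\<^sub>M Uth) (\<lambda>z. (s (fst z))\<^sup>2 * (cos (snd z))\<^sup>2)" "(\<integral>z. (s (fst z))\<^sup>2 * (cos (snd z))\<^sup>2 \<partial>(N \<Otimes>\<^sub>M Uth)) = (1 - (\<integral>x. x\<^sup>2 \<partial>N)) * (1/2)"
      using PI[of "\<lambda>x. (s x)\<^sup>2" "\<lambda>y. (cos y)\<^sup>2"] sm s2b cs by (simp_all add: U_cos2 s2)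
    have j5: "integrable (N \<Otimes>\<^sub>M Uth) (\<lambda>z. (s (fst z))\<^sup>2 * (sin (snd z))\<^sup>2)" "(\<integral>z. (s (fst z))\<^sup>2 * (sin (snd z))\<^sup>2 \<partial>(N \<Otimes>\<^sub>M Uth)) = (1 - (\<integral>x. x\<^sup>2 \<partial>N)) * (1/2)"
      using PI[of "\<lambda>x. (s x)\<^sup>2" "\<lambda>y. (sin y)\<^sup>2"] sm s2b cs by (simp_all add: U_sin2 s2)
    have j6: "integrable (N \<Otimes>\<^sub>M Uth) (\<lambda>z. (s (fst z))\<^sup>2 * (sin (snd z) * cos (snd z)))" "(\<integral>z. (s (fst z))\<^sup>2 * (sin (snd z) * cos (snd z)) \<partial>(N \<Otimes>\<^sub>M Uth)) = 0"
      using PI[of "\<lambda>x. (s x)\<^sup>2" "\<lambda>y. sin y * cos y"] sm s2b cs by (simp_all add: U_sincos)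
    have ge2: "(g z \<bullet> v)\<^sup>2 = (R \<bullet> v)\<^sup>2 * (fst z)\<^sup>2 + (2 * (R \<bullet> v) * (P \<bullet> v)) * (fst z * s (fst z) * cos (snd z))
        + (2 * (R \<bullet> v) * (Q \<bullet> v)) * (fst z * s (fst z) * sin (snd z))
        + (P \<bullet> v)\<^sup>2 * ((s (fst z))\<^sup>2 * (cos (snd z))\<^sup>2) + (Q \<bullet> v)\<^sup>2 * ((s (fst z))\<^sup>2 * (sin (snd z))\<^sup>2)
        + (2 * (P \<bullet> v) * (Q \<bullet> v)) * ((s (fst z))\<^sup>2 * (sin (snd z) * cos (snd z)))" for z
      unfolding ge by (simp add: power2_eq_square algebra_simps)
    have "v \<bullet> ((\<integral>\<Omega>. (\<chi> a b. \<Omega>$a * \<Omega>$b) \<partial>axi R N) *v v) = T (integral\<^sup>L (axi R N) mf)"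
      unfolding T_def mf_def ..
    also have "\<dots> = (\<integral>\<Omega>. T (mf \<Omega>) \<partial>axi R N)" by (rule integral_bounded_linear[OF Tl intM, symmetric])
    also have "\<dots> = (\<integral>\<Omega>. (\<Omega> \<bullet> v)\<^sup>2 \<partial>axi R N)" by (simp add: Tmf)
    also have "\<dots> = (\<integral>z. (g z \<bullet> v)\<^sup>2 \<partial>(N \<Otimes>\<^sub>M Uth))" unfolding axi
      by (rule integral_distr[OF gm]) (intro borel_measurable_continuous_onI continuous_intros)
    also have "\<dots> = (\<integral>x. x\<^sup>2 \<partial>N) * (R \<bullet> v)\<^sup>2 + (1 - (\<integral>x. x\<^sup>2 \<partial>N)) * ((P \<bullet> v)\<^sup>2 + (Q \<bullet> v)\<^sup>2) / 2"
    proof -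
      have "(\<integral>z. (g z \<bullet> v)\<^sup>2 \<partial>(N \<Otimes>\<^sub>M Uth)) = (R \<bullet> v)\<^sup>2 * (\<integral>x. x\<^sup>2 \<partial>N) + (2 * (R \<bullet> v) * (P \<bullet> v)) * 0
        + (2 * (R \<bullet> v) * (Q \<bullet> v)) * 0 + (P \<bullet> v)\<^sup>2 * ((1 - (\<integral>x. x\<^sup>2 \<partial>N)) * (1/2))
        + (Q \<bullet> v)\<^sup>2 * ((1 - (\<integral>x. x\<^sup>2 \<partial>N)) * (1/2)) + (2 * (P \<bullet> v) * (Q \<bullet> v)) * 0"
        unfolding ge2
      proof (rule has_bochner_integral_integral_eq)
        have hb: "has_bochner_integral (N \<Otimes>\<^sub>M Uth) f x" if "integrable (N \<Otimes>\<^sub>M Uth) f" "integral\<^sup>L (N \<Otimes>\<^sub>M Uth) f = x" for f x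
          using has_bochner_integral_integrable[OF that(1)] that(2) by simp
        show "has_bochner_integral (N \<Otimes>\<^sub>M Uth) (\<lambda>z. (R \<bullet> v)\<^sup>2 * (fst z)\<^sup>2 + (2 * (R \<bullet> v) * (P \<bullet> v)) * (fst z * s (fst z) * cos (snd z))
        + (2 * (R \<bullet> v) * (Q \<bullet> v)) * (fst z * s (fst z) * sin (snd z))
        + (P \<bullet> v)\<^sup>2 * ((s (fst z))\<^sup>2 * (cos (snd z))\<^sup>2) + (Q \<bullet> v)\<^sup>2 * ((s (fst z))\<^sup>2 * (sin (snd z))\<^sup>2)
        + (2 * (P \<bullet> v) * (Q \<bullet> v)) * ((s (fst z))\<^sup>2 * (sin (snd z) * cos (snd z))))
          ((R \<bullet> v)\<^sup>2 * (\<integral>x. x\<^sup>2 \<partial>N) + (2 * (R \<bullet> v) * (P \<bullet> v)) * 0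
        + (2 * (R \<bullet> v) * (Q \<bullet> v)) * 0 + (P \<bullet> v)\<^sup>2 * ((1 - (\<integral>x. x\<^sup>2 \<partial>N)) * (1/2))
        + (Q \<bullet> v)\<^sup>2 * ((1 - (\<integral>x. x\<^sup>2 \<partial>N)) * (1/2)) + (2 * (P \<bullet> v) * (Q \<bullet> v)) * 0)"
          by (intro has_bochner_integral_add has_bochner_integral_mult_right hb j1 j2 j3 j4 j5 j6)
      qed
      then show ?thesis by (simp add: field_simps)
    qed
    finally show ?thesis .
  qed
qed


lemma tle:
  fixes w a b L :: real
  assumes "w \<ge> 0" "a\<^sup>2 \<le> b" "L \<ge> w * b" "L > 0"
  shows "(w * a)\<^sup>2 / L \<le> w"
proof -
  have "(w * a)\<^sup>2 = w * (w * a\<^sup>2)" by (simp add: power2_eq_square)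
  also have "\<dots> \<le> w * (w * b)" using assms by (intro mult_left_mono) auto
  also have "\<dots> \<le> w * L" using assms by (intro mult_left_mono) auto
  finally show ?thesis using assms by (simp add: divide_le_eq)
qed

lemma key:
  fixes wj wk wl aj bj bk bl L :: real
  assumes "wj > 0" "wk \<ge> 0" "wl \<ge> 0" "aj\<^sup>2 \<le> bj" "bk \<le> 1" "bl \<le> 1"
    "L = wj*bj + wk*(1-bk)/2 + wl*(1-bl)/2" "(wj*aj)\<^sup>2/L = wj" "L > 0"
  shows "aj\<^sup>2 = bj \<and> L = wj*bj \<and> wk*(1-bk) = 0 \<and> wl*(1-bl) = 0"
proof -
  have "(wj*aj)\<^sup>2 = wj * L" using assms(8,9) by (simp add: divide_eq_eq)
  then have "wj * (wj * aj\<^sup>2) = wj * L" by (simp add: power2_eq_square algebra_simps)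
  then have e: "wj * aj\<^sup>2 = L" using assms(1) by simp
  have "wj * aj\<^sup>2 \<le> wj * bj" using assms by (intro mult_left_mono) auto
  moreover have "wk*(1-bk) \<ge> 0" "wl*(1-bl) \<ge> 0" using assms by auto
  ultimately have z: "wk*(1-bk) = 0" "wl*(1-bl) = 0" "L = wj*bj" using e assms(7) by linarith+
  then have "wj * aj\<^sup>2 = wj * bj" using e by simp
  then have "aj\<^sup>2 = bj" using assms(1) by simp
  with z show ?thesis by simp
qed

lemma alg:
  fixes wA wB wC aA aB aC bA bB bC L1 L2 L3 F1 F2 F3 E :: real
  assumes w: "wA \<ge> 0" "wB \<ge> 0" "wC \<ge> 0"
    and ab: "aA\<^sup>2 \<le> bA" "aB\<^sup>2 \<le> bB" "aC\<^sup>2 \<le> bC"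
    and b: "bA \<le> 1" "bB \<le> 1" "bC \<le> 1"
    and L: "L1 = wA*bA + wB*(1-bB)/2 + wC*(1-bC)/2" "L2 = wB*bB + wA*(1-bA)/2 + wC*(1-bC)/2"
       "L3 = wC*bC + wA*(1-bA)/2 + wB*(1-bB)/2"
    and F: "F1 = wA*aA" "F2 = wB*aB" "F3 = wC*aC" and E: "E = wA+wB+wC"
    and Lp: "L1 > 0" "L2 > 0" "L3 > 0"
    and eq: "F1\<^sup>2/L1 + F2\<^sup>2/L2 + F3\<^sup>2/L3 = E"
  shows "(L1 = F1\<^sup>2/E \<and> L2 = L3 \<and> F2 = 0 \<and> F3 = 0) \<or> (L2 = F2\<^sup>2/E \<and> L1 = L3 \<and> F1 = 0 \<and> F3 = 0)
     \<or> (L3 = F3\<^sup>2/E \<and> L1 = L2 \<and> F1 = 0 \<and> F2 = 0) \<or> (\<bar>F1\<bar> = L1 \<and> \<bar>F2\<bar> = L2 \<and> \<bar>F3\<bar> = L3)"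
proof -
  have le: "bA \<ge> 0" "bB \<ge> 0" "bC \<ge> 0" using ab by (auto intro: order_trans[OF zero_le_power2])
  have t1: "F1\<^sup>2/L1 \<le> wA" unfolding F by (rule tle) (use w ab b Lp L in auto)
  have t2: "F2\<^sup>2/L2 \<le> wB" unfolding F by (rule tle) (use w ab b Lp L in auto)
  have t3: "F3\<^sup>2/L3 \<le> wC" unfolding F by (rule tle) (use w ab b Lp L in auto)
  have e1: "F1\<^sup>2/L1 = wA" and e2: "F2\<^sup>2/L2 = wB" and e3: "F3\<^sup>2/L3 = wC" using t1 t2 t3 eq E by linarith+
  have k1: "aA\<^sup>2 = bA \<and> L1 = wA*bA \<and> wB*(1-bB) = 0 \<and> wC*(1-bC) = 0" if "wA > 0"
    by (rule key) (use that w ab b L Lp e1 F in auto)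
  have k2: "aB\<^sup>2 = bB \<and> L2 = wB*bB \<and> wA*(1-bA) = 0 \<and> wC*(1-bC) = 0" if "wB > 0"
    by (rule key) (use that w ab b L Lp e2 F in auto)
  have k3: "aC\<^sup>2 = bC \<and> L3 = wC*bC \<and> wA*(1-bA) = 0 \<and> wB*(1-bB) = 0" if "wC > 0"
    by (rule key) (use that w ab b L Lp e3 F in auto)
  have sq1: "\<bar>a\<bar> = 1" if "a\<^sup>2 = 1" for a :: real using that by (simp add: abs_square_eq_1)
  consider "wA > 0" "wB > 0" "wC > 0" | "wA > 0" "wB > 0" "wC = 0" | "wA > 0" "wB = 0" "wC > 0"
    | "wA > 0" "wB = 0" "wC = 0" | "wA = 0" "wB > 0" "wC > 0" | "wA = 0" "wB > 0" "wC = 0"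
    | "wA = 0" "wB = 0" "wC > 0" | "wA = 0" "wB = 0" "wC = 0" using w by argo
  then show ?thesis
  proof cases
    case 1
    then have "bA = 1" "bB = 1" "bC = 1" using k1 k2 k3 by auto
    moreover from this have "\<bar>aA\<bar> = 1" "\<bar>aB\<bar> = 1" "\<bar>aC\<bar> = 1" using k1 k2 k3 1 sq1 by auto
    ultimately show ?thesis using 1 k1 k2 k3 F by (simp add: abs_mult)
  next
    case 2
    then have "bA = 1" "bB = 1" using k1 k2 by auto
    then show ?thesis using 2 L Lp by simp
  next
    case 3
    then have "bA = 1" "bC = 1" using k1 k3 by auto
    then show ?thesis using 3 L Lp by simp
  next
    case 5
    then have "bB = 1" "bC = 1" using k2 k3 by auto
    then show ?thesis using 5 L Lp by simp
  next
    case 4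
    then have "L1 = F1\<^sup>2/E" using k1 F E by (simp add: power2_eq_square)
    then show ?thesis using 4 L F by simp
  next
    case 6
    then have "L2 = F2\<^sup>2/E" using k2 F E by (simp add: power2_eq_square)
    then show ?thesis using 6 L F by simp
  next
    case 7
    then have "L3 = F3\<^sup>2/E" using k3 F E by (simp add: power2_eq_square)
    then show ?thesis using 7 L F by simp
  next
    case 8
    then show ?thesis using L Lp by simp
  qed
qed

lemma obasis_props:
  fixes R P Q :: "real^3"
  assumes R: "norm R = 1" and PQ: "obasis R = (P,Q)"
  shows "norm P = 1 \<and> norm Q = 1 \<and> P \<bullet> Q = 0 \<and> P \<bullet> R = 0 \<and> Q \<bullet> R = 0"
proof -
  have "\<exists>x. (case x of (P,Q) \<Rightarrow> norm P = 1 \<and> norm Q = 1 \<and> P \<bullet> Q = 0 \<and> P \<bullet> R = 0 \<and> Q \<bullet> R = 0)"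
    using obasis_exists[OF R] by auto
  from someI_ex[OF this] show ?thesis using PQ unfolding obasis_def by simp
qed

lemma nu_facts:
  fixes N :: "real measure"
  assumes N: "prob_space N" "sets N = sets borel" "emeasure N {-1..1} = 1"
  shows "(\<integral>x. x \<partial>N)\<^sup>2 \<le> (\<integral>x. x\<^sup>2 \<partial>N)" "(\<integral>x. x\<^sup>2 \<partial>N) \<le> 1"
proof -
  interpret N: prob_space N by fact
  have ae: "AE x in N. x \<in> {-1..1}"
    using N(3) by (subst N.AE_in_set_eq_1) (auto simp: N(2) N.emeasure_eq_measure)
  have intx: "integrable N (\<lambda>x. x)"
  proof (rule N.integrable_const_bound[where B=1])
    show "AE x in N. norm x \<le> 1" using ae by eventually_elim auto
  qed (simp add: N(2) measurable_cong_sets[OF N(2) refl])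
  have intx2: "integrable N (\<lambda>x. x\<^sup>2)"
  proof (rule N.integrable_const_bound[where B=1])
    show "AE x in N. norm (x\<^sup>2) \<le> 1" using ae by eventually_elim (auto simp: abs_square_le_1)
  qed (simp add: N(2) measurable_cong_sets[OF N(2) refl])
  have "0 \<le> N.variance (\<lambda>x. x)" by simp
  also have "N.variance (\<lambda>x. x) = (\<integral>x. x\<^sup>2 \<partial>N) - (\<integral>x. x \<partial>N)\<^sup>2"
    using N.variance_eq[of "\<lambda>x. x"] intx intx2 by simp
  finally show "(\<integral>x. x \<partial>N)\<^sup>2 \<le> (\<integral>x. x\<^sup>2 \<partial>N)" by simp
  have "(\<integral>x. x\<^sup>2 \<partial>N) \<le> (\<integral>x. 1 \<partial>N)"
    by (rule integral_mono_AE[OF intx2]) (use ae in \<open>auto simp: abs_square_le_1 abs_le_iff elim!: AE_mp intro!: AE_I2\<close>)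
  then show "(\<integral>x. x\<^sup>2 \<partial>N) \<le> 1" by (simp add: N.prob_space)
qed

theorem mainTheorem6:
  fixes R :: "nat \<Rightarrow> real^3" and w :: "nat \<Rightarrow> real" and \<nu> :: "nat \<Rightarrow> real measure"
  assumes unit: "\<forall>i\<in>{1,2,3}. norm (R i) = 1"
    and orth: "\<forall>i\<in>{1,2,3}. \<forall>j\<in>{1,2,3}. i \<noteq> j \<longrightarrow> R i \<bullet> R j = 0"
    and wpos: "\<forall>i\<in>{1,2,3}. w i \<ge> 0"
    and prob: "\<forall>i\<in>{1,2,3}. prob_space (\<nu> i)"
    and borel: "\<forall>i\<in>{1,2,3}. sets (\<nu> i) = sets borel"
    and supp: "\<forall>i\<in>{1,2,3}. emeasure (\<nu> i) {-1..1} = 1"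
    and lpos: "\<forall>i\<in>{1,2,3}. R i \<bullet> (mom2 R w \<nu> *v R i) > 0"
    and eq: "(\<Sum>i\<in>{1,2,3}. (mom1 R w \<nu> \<bullet> R i)\<^sup>2 / (R i \<bullet> (mom2 R w \<nu> *v R i))) = mom0 R w \<nu>"
  shows "(\<exists>i\<in>{1,2,3}. R i \<bullet> (mom2 R w \<nu> *v R i) = (mom1 R w \<nu> \<bullet> R i)\<^sup>2 / mom0 R w \<nu> \<and>
            (\<forall>j\<in>{1,2,3}. \<forall>k\<in>{1,2,3}. j \<noteq> i \<and> k \<noteq> i \<and> j \<noteq> k \<longrightarrow>
               R j \<bullet> (mom2 R w \<nu> *v R j) = R k \<bullet> (mom2 R w \<nu> *v R k) \<and>
               mom1 R w \<nu> \<bullet> R j = 0 \<and> mom1 R w \<nu> \<bullet> R k = 0))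
       \<or> (\<forall>j\<in>{1,2,3}. \<bar>mom1 R w \<nu> \<bullet> R j\<bar> = R j \<bullet> (mom2 R w \<nu> *v R j))"
proof -
  define PP where "PP i = fst (obasis (R i))" for i
  define QQ where "QQ i = snd (obasis (R i))" for i
  have PQ: "obasis (R i) = (PP i, QQ i)" for i by (simp add: PP_def QQ_def)
  define a where "a i = (\<integral>x. x \<partial>\<nu> i)" for i
  define b where "b i = (\<integral>x. x\<^sup>2 \<partial>\<nu> i)" for i
  have u: "norm (R i) = 1" "prob_space (\<nu> i)" "sets (\<nu> i) = sets borel" "emeasure (\<nu> i) {-1..1} = 1"
     if "i \<in> {1,2,3}" for i using that unit prob borel supp by auto
  note am = axi_moments[OF u(1) PQ u(2,3,4)]
  note op = obasis_props[OF u(1) PQ]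
  note nf = nu_facts[OF u(2,3,4)]
  have RR: "R i \<bullet> R j = (if i = j then 1 else 0)" if "i \<in> {1,2,3}" "j \<in> {1,2,3}" for i j
  proof (cases "i = j")
    case True
    then show ?thesis using u(1)[OF that(1)] by (simp add: dot_square_norm)
  qed (use orth that in auto)
  have PQR: "(PP i \<bullet> R j)\<^sup>2 + (QQ i \<bullet> R j)\<^sup>2 = (if i = j then 0 else 1)" if "i \<in> {1,2,3}" "j \<in> {1,2,3}" for i j
  proof (cases "i = j")
    case True
    then show ?thesis using op[OF that(1)] by simp
  next
    case False
    have "(R j \<bullet> PP i)\<^sup>2 + (R j \<bullet> QQ i)\<^sup>2 + (R j \<bullet> R i)\<^sup>2 = (norm (R j))\<^sup>2"
      using op[OF that(1)] u(1)[OF that(1)] by (intro parseval3) auto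
    then show ?thesis using False RR[OF that(2,1)] u(1)[OF that(2)] by (simp add: inner_commute)
  qed
  have E: "mom0 R w \<nu> = w 1 + w 2 + w 3" unfolding mom0_def using am(1)[of 1] am(1)[of 2] am(1)[of 3] by simp
  have F: "mom1 R w \<nu> \<bullet> R j = w j * a j" if j: "j \<in> {1,2,3}" for j
  proof -
    have "mom1 R w \<nu> \<bullet> R j = w 1 * (a 1 * (R 1 \<bullet> R j)) + w 2 * (a 2 * (R 2 \<bullet> R j)) + w 3 * (a 3 * (R 3 \<bullet> R j))"
      unfolding mom1_def by (simp add: inner_add_left am(2) a_def)
    then show ?thesis using j RR[OF _ j] by auto
  qed
  have L: "R j \<bullet> (mom2 R w \<nu> *v R j) = (\<Sum>i\<in>{1,2,3}. w i * (b i * (if i = j then 1 else 0) + (1 - b i) * (if i = j then 0 else 1) / 2))"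
    if j: "j \<in> {1,2,3}" for j
  proof -
    have "R j \<bullet> (mom2 R w \<nu> *v R j) = (\<Sum>i\<in>{1,2,3}. w i * (b i * (R i \<bullet> R j)\<^sup>2 + (1 - b i) * ((PP i \<bullet> R j)\<^sup>2 + (QQ i \<bullet> R j)\<^sup>2) / 2))"
      unfolding mom2_def by (simp add: matrix_vector_mult_add_rdistrib inner_add_right
           scaleR_matrix_vector_assoc[symmetric] am(3) b_def)
    also have "\<dots> = (\<Sum>i\<in>{1,2,3}. w i * (b i * (if i = j then 1 else 0) + (1 - b i) * (if i = j then 0 else 1) / 2))"
      by (rule sum.cong) (use RR[OF _ j] PQR[OF _ j] in auto)
    finally show ?thesis .
  qed
  have L1: "R 1 \<bullet> (mom2 R w \<nu> *v R 1) = w 1 * b 1 + w 2 * (1 - b 2)/2 + w 3 * (1 - b 3)/2"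
    using L[of 1] by simp
  have L2: "R 2 \<bullet> (mom2 R w \<nu> *v R 2) = w 2 * b 2 + w 1 * (1 - b 1)/2 + w 3 * (1 - b 3)/2"
    using L[of 2] by simp
  have L3: "R 3 \<bullet> (mom2 R w \<nu> *v R 3) = w 3 * b 3 + w 1 * (1 - b 1)/2 + w 2 * (1 - b 2)/2"
    using L[of 3] by simp
  have main: "(L1' = F1'\<^sup>2/E' \<and> L2' = L3' \<and> F2' = 0 \<and> F3' = 0) \<or> (L2' = F2'\<^sup>2/E' \<and> L1' = L3' \<and> F1' = 0 \<and> F3' = 0)
     \<or> (L3' = F3'\<^sup>2/E' \<and> L1' = L2' \<and> F1' = 0 \<and> F2' = 0) \<or> (\<bar>F1'\<bar> = L1' \<and> \<bar>F2'\<bar> = L2' \<and> \<bar>F3'\<bar> = L3')"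
    if defs: "L1' = R 1 \<bullet> (mom2 R w \<nu> *v R 1)" "L2' = R 2 \<bullet> (mom2 R w \<nu> *v R 2)" "L3' = R 3 \<bullet> (mom2 R w \<nu> *v R 3)"
      "F1' = mom1 R w \<nu> \<bullet> R 1" "F2' = mom1 R w \<nu> \<bullet> R 2" "F3' = mom1 R w \<nu> \<bullet> R 3" "E' = mom0 R w \<nu>"
    for L1' L2' L3' F1' F2' F3' E'
  proof (rule alg[where aA="a 1" and aB="a 2" and aC="a 3" and bA="b 1" and bB="b 2" and bC="b 3"
      and wA="w 1" and wB="w 2" and wC="w 3"])
    show "w 1 \<ge> 0" "w 2 \<ge> 0" "w 3 \<ge> 0" using wpos by auto
    show "(a 1)\<^sup>2 \<le> b 1" "(a 2)\<^sup>2 \<le> b 2" "(a 3)\<^sup>2 \<le> b 3" "b 1 \<le> 1" "b 2 \<le> 1" "b 3 \<le> 1"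
      using nf[of 1] nf[of 2] nf[of 3] by (auto simp: a_def b_def)
    show "L1' = w 1 * b 1 + w 2 * (1 - b 2)/2 + w 3 * (1 - b 3)/2" using L1 defs by simp
    show "L2' = w 2 * b 2 + w 1 * (1 - b 1)/2 + w 3 * (1 - b 3)/2" using L2 defs by simp
    show "L3' = w 3 * b 3 + w 1 * (1 - b 1)/2 + w 2 * (1 - b 2)/2" using L3 defs by simp
    show "F1' = w 1 * a 1" "F2' = w 2 * a 2" "F3' = w 3 * a 3" using F[of 1] F[of 2] F[of 3] defs by auto
    show "E' = w 1 + w 2 + w 3" using E defs by simp
    show "L1' > 0" "L2' > 0" "L3' > 0" using lpos defs by auto
    show "F1'\<^sup>2/L1' + F2'\<^sup>2/L2' + F3'\<^sup>2/L3' = E'" using eq defs by simp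
  qed
  let ?L = "\<lambda>i. R i \<bullet> (mom2 R w \<nu> *v R i)" and ?F = "\<lambda>i. mom1 R w \<nu> \<bullet> R i" and ?E = "mom0 R w \<nu>"
  from main[OF refl refl refl refl refl refl refl]
  consider (c1) "?L 1 = (?F 1)\<^sup>2 / ?E" "?L 2 = ?L 3" "?F 2 = 0" "?F 3 = 0"
    | (c2) "?L 2 = (?F 2)\<^sup>2 / ?E" "?L 1 = ?L 3" "?F 1 = 0" "?F 3 = 0"
    | (c3) "?L 3 = (?F 3)\<^sup>2 / ?E" "?L 1 = ?L 2" "?F 1 = 0" "?F 2 = 0"
    | (c4) "\<bar>?F 1\<bar> = ?L 1" "\<bar>?F 2\<bar> = ?L 2" "\<bar>?F 3\<bar> = ?L 3"
    by argo
  then show ?thesis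
  proof cases
    case c1
    show ?thesis
      by (rule disjI1, rule bexI[of _ 1]) (use c1 in auto)
  next
    case c2
    show ?thesis
      by (rule disjI1, rule bexI[of _ 2]) (use c2 in auto)
  next
    case c3
    show ?thesis
      by (rule disjI1, rule bexI[of _ 3]) (use c3 in auto)
  next
    case c4
    show ?thesis
      by (rule disjI2) (use c4 in auto)
  qed
qed

end
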